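(* Let $\rho\in\mathcal{D}$ be non-singular with $f$ differentiable at $\rho$, let $\varphi(\alpha):=\log\operatorname{tr}\exp[\log\rho-\alpha\nabla f(\rho)]$ and $\Delta:=\lambda_{\max}(\nabla f(\rho))-\lambda_{\min}(\nabla f(\rho))$. Then $\varphi''(\alpha)\le\Delta^2/4$ for all $\alpha\in\mathbb{R}$.
   Context: $\mathcal{D}=\{\rho\in\mathbb{C}^{d\times d}:\rho\succeq0,\ \operatorname{tr}\rho=1\}$; $f$ is a convex function on $d\times d$ Hermitian matrices with Hermitian gradient $\nabla f(\rho)$ w.r.t. $\langle A,B\rangle=\operatorname{tr}(A^{\mathrm H}B)$; $\exp,\log$ are matrix functions; $\lambda_{\max},\lambda_{\min}$ are largest/smallest eigenvalues. *)

theory Defs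
  imports "HOL-Analysis.Analysis"
begin

type_synonym 'n cmat = "complex^'n^'n"

definition adj :: "'n::finite cmat \<Rightarrow> 'n cmat" where
  "adj A = (\<chi> i j. cnj (A $ j $ i))"

definition hermitian :: "'n::finite cmat \<Rightarrow> bool" where
  "hermitian A \<longleftrightarrow> adj A = A"

definition psd :: "'n::finite cmat \<Rightarrow> bool" where
  "psd A \<longleftrightarrow> hermitian A \<and>
     (\<forall>x::complex^'n. Re (\<Sum>i\<in>UNIV. cnj (x $ i) * ((A *v x) $ i)) \<ge> 0)"

definition density :: "'n::finite cmat set" where
  "density = {\<rho>. psd \<rho> \<and> trace \<rho> = 1}"

fun matpow :: "'n::finite cmat \<Rightarrow> nat \<Rightarrow> 'n cmat" where
  "matpow A 0 = mat 1"
| "matpow A (Suc k) = A ** matpow A k"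

definition mexp :: "'n::finite cmat \<Rightarrow> 'n cmat" where
  "mexp A = (\<Sum>k. (1 / fact k) *\<^sub>R matpow A k)"

definition mlog :: "'n::finite cmat \<Rightarrow> 'n cmat" where
  "mlog A = (THE H. hermitian H \<and> mexp H = A)"

definition real_eigenvalues :: "'n::finite cmat \<Rightarrow> real set" where
  "real_eigenvalues A = {l. \<exists>v::complex^'n. v \<noteq> 0 \<and> A *v v = complex_of_real l *s v}"

definition lambda_max :: "'n::finite cmat \<Rightarrow> real" where
  "lambda_max A = Max (real_eigenvalues A)"

definition lambda_min :: "'n::finite cmat \<Rightarrow> real" where
  "lambda_min A = Min (real_eigenvalues A)"

text \<open>Inner product <A,B> = tr(A^H B); on Hermitian matrices it is real, we take its real part.\<close>
definition hs_inner :: "'n::finite cmat \<Rightarrow> 'n cmat \<Rightarrow> real" where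
  "hs_inner A B = Re (trace (adj A ** B))"

end

theory Submission
  imports Defs
begin
definition cinner :: "complex^'n::finite \<Rightarrow> complex^'n \<Rightarrow> complex" where
  "cinner x y = (\<Sum>i\<in>UNIV. cnj (x$i) * y$i)"

lemma cinner_add_right: "cinner x (y + z) = cinner x y + cinner x z"
  by (simp add: cinner_def distrib_left sum.distrib)
lemma cinner_add_left: "cinner (x + y) z = cinner x z + cinner y z"
  by (simp add: cinner_def distrib_right sum.distrib)
lemma cinner_diff_right: "cinner x (y - z) = cinner x y - cinner x z"
  by (simp add: cinner_def right_diff_distrib sum_subtractf)
lemma cinner_diff_left: "cinner (x - y) z = cinner x z - cinner y z"
  by (simp add: cinner_def left_diff_distrib sum_subtractf)
lemma cinner_scale_right: "cinner x (c *s y) = c * cinner x y"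
  by (simp add: cinner_def sum_distrib_left algebra_simps)
lemma cinner_scale_left: "cinner (c *s x) y = cnj c * cinner x y"
  by (simp add: cinner_def sum_distrib_left algebra_simps)
lemma cinner_zero_right[simp]: "cinner x 0 = 0" by (simp add: cinner_def)
lemma cinner_zero_left[simp]: "cinner 0 x = 0" by (simp add: cinner_def)
lemma cinner_sum_right: "cinner x (\<Sum>s\<in>S. f s) = (\<Sum>s\<in>S. cinner x (f s))"
  by (induction S rule: infinite_finite_induct) (auto simp: cinner_add_right)
lemma cinner_sum_left: "cinner (\<Sum>s\<in>S. f s) x = (\<Sum>s\<in>S. cinner (f s) x)"
  by (induction S rule: infinite_finite_induct) (auto simp: cinner_add_left)
lemma cinner_cnj: "cinner y x = cnj (cinner x y)"
  by (simp add: cinner_def mult.commute)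
lemma cinner_self: "cinner x x = complex_of_real (\<Sum>i\<in>UNIV. (cmod (x$i))\<^sup>2)"
  unfolding cinner_def of_real_sum
  by (intro sum.cong refl) (simp add: cmod_power2 complex_eq_iff power2_eq_square[symmetric])
lemma norm_sq_cinner: "(norm x)\<^sup>2 = Re (cinner x x)"
  unfolding cinner_self norm_vec_def L2_set_def by (simp add: sum_nonneg)
lemma cinner_self_eq0: "cinner x x = 0 \<longleftrightarrow> x = 0"
proof -
  have "cinner x x = 0 \<longleftrightarrow> (norm x)\<^sup>2 = 0"
    using norm_sq_cinner[of x] cinner_self[of x] by (auto simp: complex_eq_iff)
  thus ?thesis by simp
qed
lemma inner_Re_cinner: "inner x y = Re (cinner x y)"
  by (simp add: cinner_def inner_vec_def inner_complex_def Re_sum)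

lemma mv_scale: "(A::complex^'n::finite^'n) *v (c *s x) = c *s (A *v x)"
  by (simp add: vec_eq_iff matrix_vector_mult_def sum_distrib_left algebra_simps)
lemma mv_add: "(A::complex^'n::finite^'n) *v (x + y) = A *v x + A *v y"
  by (simp add: matrix_vector_right_distrib)
lemma mv_diff: "(A::complex^'n::finite^'n) *v (x - y) = A *v x - A *v y"
  by (simp add: vec_eq_iff matrix_vector_mult_def right_diff_distrib sum_subtractf)
lemma mv_sum: "(A::complex^'n::finite^'n) *v (\<Sum>s\<in>S. f s) = (\<Sum>s\<in>S. A *v f s)"
  by (induction S rule: infinite_finite_induct) (auto simp: mv_add)

lemma cinner_adj: "cinner (A *v x) y = cinner x (adj A *v y)"
  unfolding cinner_def adj_def matrix_vector_mult_def
  apply (simp add: sum_distrib_left sum_distrib_right)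
  apply (subst sum.swap)
  apply (simp add: ac_simps)
  done

lemma herm_cinner: "hermitian A \<Longrightarrow> cinner (A *v x) y = cinner x (A *v y)"
  by (simp add: hermitian_def cinner_adj)

definition ons :: "(complex^'n::finite) set \<Rightarrow> bool" where
  "ons S \<longleftrightarrow> finite S \<and> (\<forall>s\<in>S. cinner s s = 1) \<and> (\<forall>s\<in>S. \<forall>t\<in>S. s \<noteq> t \<longrightarrow> cinner s t = 0)"

definition compl :: "(complex^'n::finite) set \<Rightarrow> bool" where
  "compl S \<longleftrightarrow> (\<forall>x. x = (\<Sum>s\<in>S. cinner s x *s s))"

lemma ons_coeff:
  assumes "ons S" "t \<in> S"
  shows "cinner t (\<Sum>s\<in>S. c s *s s) = c t"
proof -
  have "cinner t (\<Sum>s\<in>S. c s *s s) = (\<Sum>s\<in>S. c s * cinner t s)"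
    by (simp add: cinner_sum_right cinner_scale_right)
  also have "\<dots> = c t * cinner t t"
    using assms unfolding ons_def by (subst sum.remove[of S t]) (auto intro!: sum.neutral, metis)
  finally show ?thesis using assms by (simp add: ons_def)
qed

lemma cinner_self_norm: "cinner x x = complex_of_real ((norm x)\<^sup>2)"
  using norm_sq_cinner[of x] cinner_self[of x] by (simp add: complex_eq_iff)

lemma scaleR_vec_conv: "(c::real) *\<^sub>R (x::complex^'n::finite) = complex_of_real c *s x"
  by (simp add: vec_eq_iff scaleR_conv_of_real[where 'a=complex])

lemma quad_zero:
  fixes c K :: real
  assumes "\<And>e. 2*e*c \<le> e\<^sup>2*K"
  shows "c = 0"
proof -
  define a where "a = \<bar>K\<bar> + 1"
  have pos: "a > 0" "K \<le> a - 1" unfolding a_def by auto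
  have "2*(c/a)*c \<le> (c/a)\<^sup>2*K" by (rule assms)
  also have "\<dots> \<le> (c/a)\<^sup>2*(a-1)" using pos by (simp add: mult_left_mono)
  finally have "2*(c/a)*c \<le> (c/a)\<^sup>2*(a-1)" .
  hence "2*c*c*a \<le> c*c*(a-1)"
    using pos by (simp add: power2_eq_square field_simps)
  hence "c*c*(a+1) \<le> 0" by (simp add: algebra_simps)
  moreover have "c*c*(a+1) \<ge> 0" using pos by simp
  ultimately have "c*c*(a+1) = 0" by linarith
  hence "c*c = 0" using pos by simp
  thus ?thesis by simp
qed

lemma cont_cinner: "continuous_on UNIV (\<lambda>x. cinner (a::complex^'n::finite) x)"
  unfolding cinner_def by (intro continuous_intros)

lemma cont_quad: "continuous_on UNIV (\<lambda>x. Re (cinner x ((A::complex^'n::finite^'n) *v x)))"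
  unfolding cinner_def matrix_vector_mult_def by (intro continuous_intros)

lemma cont_self: "continuous_on UNIV (\<lambda>x::complex^'n::finite. cinner x x)"
  unfolding cinner_def by (intro continuous_intros)

lemma spectral:
  fixes A :: "complex^'n::finite^'n"
  assumes herm: "hermitian A"
  shows "\<exists>S. ons S \<and> compl S \<and> (\<forall>s\<in>S. \<exists>l::real. A *v s = complex_of_real l *s s)"
proof -
  define P where "P S \<longleftrightarrow> ons S \<and> (\<forall>s\<in>S. \<exists>l::real. A *v s = complex_of_real l *s s)" for S
  have bound: "card S \<le> DIM(complex^'n)" if "P S" for S
  proof -
    have o: "ons S" using that by (simp add: P_def)
    have "pairwise orthogonal S" using o unfolding pairwise_def orthogonal_def ons_def
      by (auto simp: inner_Re_cinner)
    moreover have "0 \<notin> S" using o unfolding ons_def by auto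
    ultimately have "independent S" by (rule pairwise_orthogonal_independent)
    thus ?thesis by (rule independent_bound[THEN conjunct2])
  qed
  have "P {}" by (simp add: P_def ons_def)
  then obtain S where PS: "P S" and maxS0: "\<forall>S'. P S' \<longrightarrow> card S' \<le> card S"
    using Lattices_Big.ex_has_greatest_nat[of P "{}" card "DIM(complex^'n) + 1"] bound
    by (metis less_Suc_eq_le Suc_eq_plus1)
  have maxS: "card S' \<le> card S" if "P S'" for S' using maxS0 that by blast
  have oS: "ons S" and eS: "\<forall>s\<in>S. \<exists>l::real. A *v s = complex_of_real l *s s"
    using PS by (auto simp: P_def)
  have finS: "finite S" using oS by (simp add: ons_def)
  define W where "W = {x. \<forall>s\<in>S. cinner s x = 0}"
  have W_add: "x + y \<in> W" if "x \<in> W" "y \<in> W" for x y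
    using that by (simp add: W_def cinner_add_right)
  have W_diff: "x - y \<in> W" if "x \<in> W" "y \<in> W" for x y
    using that by (simp add: W_def cinner_diff_right)
  have W_scale: "c *s x \<in> W" if "x \<in> W" for x c
    using that by (simp add: W_def cinner_scale_right)
  have W_inv: "A *v x \<in> W" if "x \<in> W" for x
  proof -
    have "cinner s (A *v x) = 0" if "s \<in> S" for s
    proof -
      obtain l :: real where l: "A *v s = complex_of_real l *s s" using eS \<open>s \<in> S\<close> by blast
      have "cinner s (A *v x) = cinner (A *v s) x" using herm_cinner[OF herm] by simp
      also have "\<dots> = 0" using \<open>x \<in> W\<close> \<open>s \<in> S\<close> by (simp add: l cinner_scale_left W_def)
      finally show ?thesis .
    qed
    thus ?thesis by (simp add: W_def)
  qed
  have W0: "\<forall>w\<in>W. w = 0"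
  proof (rule ccontr)
    assume "\<not> (\<forall>w\<in>W. w = 0)"
    then obtain w where wW: "w \<in> W" and w0: "w \<noteq> 0" by auto
    define K where "K = {x \<in> W. cinner x x = 1}"
    have Keq: "K = (\<Inter>s\<in>S. {x. cinner s x = 0}) \<inter> {x. cinner x x = 1}"
      unfolding K_def W_def by auto
    have "closed K" unfolding Keq
      by (intro closed_Int closed_INT ballI closed_Collect_eq continuous_intros cont_cinner cont_self)
    have "K \<subseteq> cball 0 1"
    proof
      fix x assume "x \<in> K"
      hence "cinner x x = 1" by (simp add: K_def)
      hence "(norm x)\<^sup>2 = 1" by (metis cinner_self_norm of_real_eq_1_iff)
      hence "norm x = 1" using norm_ge_zero[of x] by (auto simp: power2_eq_1_iff)
      thus "x \<in> cball 0 1" by simp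
    qed
    hence "bounded K" using bounded_cball bounded_subset by blast
    hence "compact K" using \<open>closed K\<close> by (simp add: compact_eq_bounded_closed)
    define w1 where "w1 = complex_of_real (1 / norm w) *s w"
    have "w1 \<in> W" unfolding w1_def by (rule W_scale[OF wW])
    moreover have "cinner w1 w1 = 1"
    proof -
      have "cinner w1 w1 = cnj (complex_of_real (1 / norm w)) * (complex_of_real (1 / norm w) * cinner w w)"
        unfolding w1_def cinner_scale_left cinner_scale_right by (rule mult.left_commute)
      also have "\<dots> = 1" using w0 by (simp add: cinner_self_norm power2_eq_square)
      finally show ?thesis .
    qed
    ultimately have "w1 \<in> K" by (simp add: K_def)
    hence "K \<noteq> {}" by auto
    define q where "q y = Re (cinner y (A *v y))" for y
    obtain x where xK: "x \<in> K" and xmax: "\<forall>y\<in>K. q y \<le> q x"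
      using continuous_attains_sup[OF \<open>compact K\<close> \<open>K \<noteq> {}\<close>
          continuous_on_subset[OF cont_quad[of A], of K]] unfolding q_def by auto
    have xW: "x \<in> W" and xx: "cinner x x = 1" using xK by (auto simp: K_def)
    have re0: "Re (cinner y (A *v x)) = 0" if yW: "y \<in> W" and xy: "cinner x y = 0" for y
    proof -
      define c where "c = Re (cinner y (A *v x))"
      define ny where "ny = (norm y)\<^sup>2"
      have yy: "cinner y y = complex_of_real ny" by (simp add: ny_def cinner_self_norm)
      have yx: "cinner y x = 0" using xy cinner_cnj[of y x] by simp
      have ny0: "ny \<ge> 0" by (simp add: ny_def)
      have cxy: "Re (cinner x (A *v y)) = c"
      proof -
        have "cinner x (A *v y) = cinner (A *v x) y" using herm_cinner[OF herm] by simp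
        also have "\<dots> = cnj (cinner y (A *v x))" by (rule cinner_cnj)
        finally show ?thesis by (simp add: c_def)
      qed
      have "2*e*c \<le> e\<^sup>2 * (ny * q x - q y)" for e :: real
      proof -
        define v where "v = x + complex_of_real e *s y"
        have vW: "v \<in> W" unfolding v_def by (intro W_add W_scale xW yW)
        have vv: "cinner v v = complex_of_real (1 + e\<^sup>2 * ny)"
          unfolding v_def
          by (simp add: cinner_add_left cinner_add_right cinner_scale_left cinner_scale_right
              xx yy xy yx power2_eq_square)
        define r where "r = 1 + e\<^sup>2 * ny"
        have r0: "r > 0" unfolding r_def using ny0 by (simp add: add_pos_nonneg)
        define u where "u = complex_of_real (1 / sqrt r) *s v"
        have uu: "cinner u u = 1"
          unfolding u_def using r0
          by (simp add: cinner_scale_left cinner_scale_right vv r_def[symmetric]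
              of_real_mult[symmetric] del: of_real_mult)
        have "u \<in> K" unfolding K_def using uu W_scale[OF vW] by (simp add: u_def)
        hence quq: "q u \<le> q x" using xmax by blast
        have "q u = q v / r"
          unfolding q_def u_def using r0
          by (simp add: mv_scale cinner_scale_left cinner_scale_right
              of_real_mult[symmetric] del: of_real_mult)
        hence "q v \<le> r * q x" using quq r0 by (simp add: divide_le_eq mult.commute)
        moreover have "q v = q x + 2*e*c + e\<^sup>2 * q y"
        proof -
          have "cinner v (A *v v) = cinner x (A *v x) + complex_of_real e * cinner x (A *v y)
               + complex_of_real e * cinner y (A *v x) + complex_of_real (e*e) * cinner y (A *v y)"
            unfolding v_def
            by (simp add: mv_add mv_scale cinner_add_left cinner_add_right cinner_scale_left
                cinner_scale_right algebra_simps)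
          thus ?thesis unfolding q_def using cxy by (simp add: c_def power2_eq_square)
        qed
        ultimately show ?thesis unfolding r_def by (simp add: algebra_simps)
      qed
      thus ?thesis using quad_zero unfolding c_def by blast
    qed
    have orth0: "cinner y (A *v x) = 0" if yW: "y \<in> W" and xy: "cinner x y = 0" for y
    proof -
      have a: "Re (cinner y (A *v x)) = 0" by (rule re0[OF yW xy])
      have "Re (cinner (\<i> *s y) (A *v x)) = 0"
        by (rule re0) (use yW xy W_scale in \<open>auto simp: cinner_scale_right\<close>)
      hence b: "Im (cinner y (A *v x)) = 0" by (simp add: cinner_scale_left)
      show ?thesis using a b by (simp add: complex_eq_iff)
    qed
    define \<mu> where "\<mu> = cinner x (A *v x)"
    define y where "y = A *v x - \<mu> *s x"
    have yW: "y \<in> W" unfolding y_def by (intro W_diff W_scale W_inv xW)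
    have xy: "cinner x y = 0" unfolding y_def \<mu>_def
      by (simp add: cinner_diff_right cinner_scale_right xx)
    have "cinner y y = cinner y (A *v x) - \<mu> * cinner y x"
      unfolding y_def by (simp only: cinner_diff_right cinner_scale_right)
    also have "\<dots> = 0" using orth0[OF yW xy] xy cinner_cnj[of y x] by simp
    finally have "y = 0" by (simp add: cinner_self_eq0)
    hence Ax: "A *v x = \<mu> *s x" by (simp add: y_def)
    have "\<mu> = cnj \<mu>" unfolding \<mu>_def using herm_cinner[OF herm, of x x] cinner_cnj[of x "A *v x"] by simp
    hence \<mu>r: "\<mu> = complex_of_real (Re \<mu>)" by (simp add: complex_eq_iff)
    have xS: "x \<notin> S" using xW xx by (auto simp: W_def)
    have "P (insert x S)"
      unfolding P_def ons_def
    proof (intro conjI ballI impI)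
      show "finite (insert x S)" using finS by simp
      show "cinner s s = 1" if "s \<in> insert x S" for s using that xx oS by (auto simp: ons_def)
      show "cinner s t = 0" if "s \<in> insert x S" "t \<in> insert x S" "s \<noteq> t" for s t
        using that oS xW cinner_cnj[of x] by (auto simp: ons_def W_def)
      show "\<exists>l::real. A *v s = complex_of_real l *s s" if "s \<in> insert x S" for s
        using that eS Ax \<mu>r by auto
    qed
    hence "card (insert x S) \<le> card S" by (rule maxS)
    thus False using xS finS by simp
  qed
  have "compl S" unfolding compl_def
  proof
    fix x
    define z where "z = x - (\<Sum>s\<in>S. cinner s x *s s)"
    have "z \<in> W" unfolding W_def z_def using oS
      by (auto simp: cinner_diff_right ons_coeff)
    hence "z = 0" using W0 by blast
    thus "x = (\<Sum>s\<in>S. cinner s x *s s)" by (simp add: z_def)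
  qed
  thus ?thesis using oS eS by blast
qed

type_synonym 'n cm = "complex^'n^'n"

definition mx :: "complex^'n::finite^'n \<Rightarrow> real" where
  "mx A = (\<Sum>i\<in>UNIV. \<Sum>j\<in>UNIV. cmod (A$i$j))"

lemma mm_diff_l: "(A::complex^'n::finite^'n) ** (B - C) = A ** B - A ** C"
  by (simp add: vec_eq_iff matrix_matrix_mult_def sum_subtractf algebra_simps)
lemma mm_diff_r: "((A::complex^'n::finite^'n) - B) ** C = A ** C - B ** C"
  by (simp add: vec_eq_iff matrix_matrix_mult_def sum_subtractf algebra_simps)
lemma mm_add_r: "((A::complex^'n::finite^'n) + B) ** C = A ** C + B ** C"
  by (simp add: vec_eq_iff matrix_matrix_mult_def sum.distrib algebra_simps)
lemma mm_scale_l: "((c::real) *\<^sub>R (A::complex^'n::finite^'n)) ** B = c *\<^sub>R (A ** B)"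
  by (simp add: vec_eq_iff matrix_matrix_mult_def scaleR_sum_right)
lemma mm_scale_r: "(A::complex^'n::finite^'n) ** ((c::real) *\<^sub>R B) = c *\<^sub>R (A ** B)"
  by (simp add: vec_eq_iff matrix_matrix_mult_def scaleR_sum_right)
lemma mv_scaleR_mat: "((c::real) *\<^sub>R (A::complex^'n::finite^'n)) *v x = c *\<^sub>R (A *v x)"
  by (simp add: vec_eq_iff matrix_vector_mult_def scaleR_sum_right)

lemma mx_nonneg: "mx A \<ge> 0"
  by (simp add: mx_def sum_nonneg)

lemma mx_add: "mx (A + B) \<le> mx A + mx B"
  unfolding mx_def by (simp add: sum.distrib[symmetric] sum_mono norm_triangle_ineq)

lemma mx_diff: "mx (A - B) \<le> mx A + mx B"
  unfolding mx_def by (simp add: sum.distrib[symmetric] sum_mono norm_triangle_ineq4)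

lemma mx_scaleR: "mx (c *\<^sub>R A) = \<bar>c\<bar> * mx A"
  unfolding mx_def by (simp add: sum_distrib_left)

lemma mx_uminus: "mx (- A) = mx A"
  unfolding mx_def by simp

lemma mx_mult: "mx (A ** B) \<le> mx A * mx B"
proof -
  have "mx (A ** B) \<le> (\<Sum>i\<in>UNIV. \<Sum>j\<in>UNIV. \<Sum>k\<in>UNIV. cmod (A$i$k) * cmod (B$k$j))"
    unfolding mx_def matrix_matrix_mult_def
    by (auto intro!: sum_mono order_trans[OF norm_sum] simp: norm_mult)
  also have "\<dots> = (\<Sum>i\<in>UNIV. \<Sum>k\<in>UNIV. cmod (A$i$k) * (\<Sum>j\<in>UNIV. cmod (B$k$j)))"
    by (simp add: sum_distrib_left) (rule sum.cong[OF refl], rule sum.swap)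
  also have "\<dots> \<le> (\<Sum>i\<in>UNIV. \<Sum>k\<in>UNIV. cmod (A$i$k) * mx B)"
    unfolding mx_def
    by (intro sum_mono mult_left_mono member_le_sum[of _ UNIV "\<lambda>k. \<Sum>j\<in>UNIV. cmod (B$k$j)"])
       (auto intro: sum_nonneg)
  also have "\<dots> = mx A * mx B" by (simp add: mx_def sum_distrib_right)
  finally show ?thesis .
qed

lemma mx_pow: "mx (Y ** matpow B k) \<le> mx Y * mx B ^ k"
proof (induction k arbitrary: Y)
  case 0 thus ?case by (simp add: matrix_mul_rid)
next
  case (Suc k)
  have "mx (Y ** matpow B (Suc k)) = mx ((Y ** B) ** matpow B k)" by (simp add: matrix_mul_assoc)
  also have "\<dots> \<le> mx (Y ** B) * mx B ^ k" by (rule Suc.IH)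
  also have "\<dots> \<le> (mx Y * mx B) * mx B ^ k"
    by (intro mult_right_mono mx_mult) (simp add: mx_nonneg)
  finally show ?case by (simp add: algebra_simps)
qed

lemma mx_pow1: "mx (matpow B k) \<le> mx (mat 1 :: complex^'n::finite^'n) * mx (B::complex^'n^'n) ^ k"
  using mx_pow[of "mat 1" B k] by (simp add: matrix_mul_lid)

lemma norm_le_mx: "norm A \<le> mx A"
proof -
  have "norm A \<le> (\<Sum>i\<in>UNIV. norm (A$i))" unfolding norm_vec_def by (rule L2_set_le_sum) simp
  also have "\<dots> \<le> mx A" unfolding mx_def
    by (intro sum_mono) (simp add: norm_vec_def L2_set_le_sum)
  finally show ?thesis .
qed

lemma trace_le_mx: "cmod (trace A) \<le> mx A"
proof -
  have "cmod (trace A) \<le> (\<Sum>i\<in>UNIV. cmod (A$i$i))" unfolding trace_def by (rule norm_sum)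
  also have "\<dots> \<le> mx A" unfolding mx_def
    by (intro sum_mono member_le_sum) auto
  finally show ?thesis .
qed

lemma Re_trace_le_mx: "\<bar>Re (trace A)\<bar> \<le> mx A"
  using abs_Re_le_cmod trace_le_mx order_trans by blast

lemma matpow_diff_mx:
  assumes "mx A \<le> R" "mx B \<le> R"
  shows "mx (matpow A (Suc k) - matpow B (Suc k)) \<le> of_nat (Suc k) * R ^ k * mx (A - B)"
proof (induction k)
  case 0 thus ?case by (simp add: matrix_mul_rid)
next
  case (Suc k)
  have R0: "R \<ge> 0" using assms mx_nonneg order_trans by blast
  have eq: "matpow A (Suc (Suc k)) - matpow B (Suc (Suc k))
     = A ** (matpow A (Suc k) - matpow B (Suc k)) + (A - B) ** matpow B (Suc k)"
    by (simp add: mm_diff_l mm_diff_r)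
  have "mx (matpow A (Suc (Suc k)) - matpow B (Suc (Suc k)))
     \<le> mx A * mx (matpow A (Suc k) - matpow B (Suc k)) + mx (A - B) * mx B ^ Suc k"
    unfolding eq by (rule order_trans[OF mx_add add_mono[OF mx_mult mx_pow]])
  also have "\<dots> \<le> R * (of_nat (Suc k) * R ^ k * mx (A - B)) + mx (A - B) * R ^ Suc k"
    using assms R0 Suc.IH
    by (intro add_mono mult_mono mult_left_mono power_mono) (auto simp: mx_nonneg)
  also have "\<dots> = of_nat (Suc (Suc k)) * R ^ Suc k * mx (A - B)" by (simp add: algebra_simps)
  finally show ?case .
qed

lemma summable_mexp: "summable (\<lambda>k. (1 / fact k) *\<^sub>R matpow (A::complex^'n::finite^'n) k)"
proof (rule summable_comparison_test')
  show "summable (\<lambda>k. mx (mat 1 :: complex^'n^'n) * (inverse (fact k) * mx A ^ k))"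
    by (intro summable_mult summable_exp)
  fix k :: nat
  have "norm ((1 / fact k) *\<^sub>R matpow A k) = (1 / fact k) * norm (matpow A k)" by simp
  also have "\<dots> \<le> (1 / fact k) * (mx (mat 1 :: complex^'n^'n) * mx A ^ k)"
    by (intro mult_left_mono order_trans[OF norm_le_mx mx_pow1]) auto
  finally show "norm ((1 / fact k) *\<^sub>R matpow A k) \<le> mx (mat 1 :: complex^'n^'n) * (inverse (fact k) * mx A ^ k)"
    by (simp add: field_simps)
qed

lemma bl_mv: "bounded_linear (\<lambda>M::complex^'n::finite^'n. M *v s)"
  unfolding linear_conv_bounded_linear[symmetric]
  by (rule linearI) (simp_all add: vec_eq_iff matrix_vector_mult_def sum.distrib scaleR_sum_right
      algebra_simps)

lemma bl_trace: "bounded_linear (\<lambda>M::complex^'n::finite^'n. trace M)"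
  unfolding linear_conv_bounded_linear[symmetric]
  by (rule linearI) (simp_all add: trace_def sum.distrib scaleR_sum_right)

lemma bl_lmul: "bounded_linear (\<lambda>M::complex^'n::finite^'n. X ** M)"
  unfolding linear_conv_bounded_linear[symmetric]
  by (rule linearI) (simp_all add: vec_eq_iff matrix_matrix_mult_def sum.distrib scaleR_sum_right
      algebra_simps)

lemma matpow_eig:
  assumes "A *v s = c *s s"
  shows "matpow A k *v s = c ^ k *s s"
proof (induction k)
  case 0 thus ?case by (simp add: matrix_vector_mul_lid)
next
  case (Suc k)
  have "matpow A (Suc k) *v s = A *v (matpow A k *v s)" by (simp add: matrix_vector_mul_assoc)
  also have "\<dots> = c ^ Suc k *s s" using assms by (simp add: Suc.IH mv_scale)
  finally show ?case .
qed

lemma mexp_eig: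
  assumes "A *v s = c *s s"
  shows "mexp A *v s = exp c *s s"
proof -
  have "mexp A *v s = (\<Sum>k. ((1 / fact k) *\<^sub>R matpow A k) *v s)"
    unfolding mexp_def by (rule bounded_linear.suminf[OF bl_mv summable_mexp])
  also have "\<dots> = (\<Sum>k. (c ^ k /\<^sub>R fact k) *s s)"
    using matpow_eig[OF assms]
    by (intro suminf_cong) (simp add: mv_scaleR_mat vec_eq_iff
        scaleR_conv_of_real[where 'a=complex] divide_inverse algebra_simps)
  also have "\<dots> = (\<Sum>k. c ^ k /\<^sub>R fact k) *s s"
  proof -
    have bl: "bounded_linear (\<lambda>z::complex. z *s s)"
      by (rule bounded_linear_intro[where K="norm s"])
         (auto simp: vec_eq_iff algebra_simps norm_vec_def norm_mult L2_set_right_distrib)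
    show ?thesis
      by (rule bounded_linear.suminf[OF bl, symmetric]) (rule summable_exp_generic)
  qed
  also have "\<dots> = exp c *s s" by (simp add: exp_def)
  finally show ?thesis .
qed

lemma swap3: "(\<Sum>s\<in>S. \<Sum>i\<in>I. \<Sum>j\<in>J. F s i j) = (\<Sum>i\<in>I. \<Sum>j\<in>J. \<Sum>s\<in>S. F s i j)"
  by (subst sum.swap, rule sum.cong[OF refl], rule sum.swap)

lemma compl_delta:
  assumes "compl S"
  shows "(\<Sum>s\<in>S. cnj (s$i) * s$j) = (if j = i then 1 else 0)"
proof -
  have "axis i (1::complex) = (\<Sum>s\<in>S. cinner s (axis i 1) *s s)" using assms by (simp add: compl_def)
  hence "axis i (1::complex) $ j = (\<Sum>s\<in>S. cinner s (axis i 1) * s$j)"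
    by (metis (no_types, lifting) sum_component vector_smult_component sum.cong)
  moreover have "cinner s (axis i 1) = cnj (s$i)" for s :: "complex^'a"
    unfolding cinner_def axis_def by (simp add: if_distrib cong: if_cong)
  ultimately show ?thesis by (simp add: axis_def)
qed

lemma trace_basis:
  assumes "compl S"
  shows "trace A = (\<Sum>s\<in>S. cinner s (A *v s))"
proof -
  have "(\<Sum>s\<in>S. cinner s (A *v s)) = (\<Sum>s\<in>S. \<Sum>i\<in>UNIV. \<Sum>j\<in>UNIV. A$i$j * (cnj (s$i) * s$j))"
    unfolding cinner_def matrix_vector_mult_def by (simp add: sum_distrib_left ac_simps)
  also have "\<dots> = (\<Sum>i\<in>UNIV. \<Sum>j\<in>UNIV. \<Sum>s\<in>S. A$i$j * (cnj (s$i) * s$j))" by (rule swap3)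
  also have "\<dots> = (\<Sum>i\<in>UNIV. \<Sum>j\<in>UNIV. A$i$j * (if j = i then 1 else 0))"
    by (simp add: sum_distrib_left[symmetric] compl_delta[OF assms])
  also have "\<dots> = trace A" by (simp add: trace_def if_distrib cong: if_cong)
  finally show ?thesis ..
qed

lemma expand_mv:
  fixes A :: "complex^'n::finite^'n"
  assumes "compl S"
  shows "A *v x = (\<Sum>s\<in>S. cinner s x *s (A *v s))"
proof -
  have "A *v x = A *v (\<Sum>s\<in>S. cinner s x *s s)" using assms by (metis compl_def)
  also have "\<dots> = (\<Sum>s\<in>S. cinner s x *s (A *v s))" by (simp only: mv_sum mv_scale)
  finally show ?thesis .
qed

lemma mat_eq_basis:
  fixes A B :: "complex^'n::finite^'n"
  assumes "compl S" "\<forall>s\<in>S. A *v s = B *v s"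
  shows "A = B"
proof -
  have "A *v x = B *v x" for x
    using expand_mv[OF assms(1), of A x] expand_mv[OF assms(1), of B x] assms(2) by simp
  thus ?thesis by (simp add: matrix_eq)
qed

lemma parseval:
  assumes "ons S" "compl S"
  shows "cinner y y = (\<Sum>s\<in>S. cnj (cinner s y) * cinner s y)"
proof -
  have "cinner y y = cinner y (\<Sum>s\<in>S. cinner s y *s s)" using assms(2) by (metis compl_def)
  also have "\<dots> = (\<Sum>s\<in>S. cinner s y * cinner y s)" by (simp add: cinner_sum_right cinner_scale_right)
  also have "\<dots> = (\<Sum>s\<in>S. cnj (cinner s y) * cinner s y)"
    by (rule sum.cong[OF refl]) (simp add: cinner_cnj[of y] mult.commute)
  finally show ?thesis .
qed

lemma cnj_mult_self: "cnj z * z = complex_of_real ((cmod z)\<^sup>2)"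
  by (metis complex_norm_square mult.commute)

lemma parseval_Re:
  assumes "ons S" "compl S"
  shows "Re (cinner y y) = (\<Sum>s\<in>S. (cmod (cinner s y))\<^sup>2)"
  using parseval[OF assms, of y] by (simp add: cnj_mult_self Re_sum)

lemma eigbasis:
  fixes M :: "complex^'n::finite^'n"
  assumes "hermitian M"
  obtains S lam where "ons S" "compl S" "\<And>s. s \<in> S \<Longrightarrow> M *v s = complex_of_real (lam s) *s s"
proof -
  obtain S where S: "ons S" "compl S" "\<forall>s\<in>S. \<exists>l::real. M *v s = complex_of_real l *s s"
    using spectral[OF assms] by blast
  then obtain lam where "\<forall>s\<in>S. M *v s = complex_of_real (lam s) *s s" by metis
  thus ?thesis using S that by blast
qed

lemma compl_nonempty:
  fixes S :: "(complex^'n::finite) set"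
  shows "compl S \<Longrightarrow> S \<noteq> {}"
proof
  assume "compl S" "S = {}"
  hence "\<forall>x::complex^'n. x = 0" by (simp add: compl_def)
  hence "axis undefined (1::complex) = (0::complex^'n)" by blast
  thus False by (simp add: axis_eq_0_iff)
qed

lemma cinner_unit: "ons S \<Longrightarrow> s \<in> S \<Longrightarrow> cinner s (c *s s) = c"
  by (simp add: cinner_scale_right ons_def)

lemma Re_trace_mexp:
  assumes "ons S" "compl S" "\<And>s. s \<in> S \<Longrightarrow> M *v s = complex_of_real (lam s) *s s"
  shows "Re (trace (mexp M)) = (\<Sum>s\<in>S. exp (lam s))"
proof -
  have "trace (mexp M) = (\<Sum>s\<in>S. cinner s (mexp M *v s))" by (rule trace_basis[OF assms(2)])
  also have "\<dots> = (\<Sum>s\<in>S. complex_of_real (exp (lam s)))"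
  proof (rule sum.cong[OF refl])
    fix s assume sS: "s \<in> S"
    show "cinner s (mexp M *v s) = complex_of_real (exp (lam s))"
      using mexp_eig[OF assms(3)[OF sS]] cinner_unit[OF assms(1) sS] by (simp add: exp_of_real)
  qed
  finally show ?thesis by (simp add: Re_sum)
qed

lemma Re_trace_X_mexp:
  assumes "ons S" "compl S" "\<And>s. s \<in> S \<Longrightarrow> M *v s = complex_of_real (lam s) *s s"
  shows "Re (trace (X ** mexp M)) = (\<Sum>s\<in>S. exp (lam s) * Re (cinner s (X *v s)))"
proof -
  have "trace (X ** mexp M) = (\<Sum>s\<in>S. cinner s ((X ** mexp M) *v s))" by (rule trace_basis[OF assms(2)])
  also have "\<dots> = (\<Sum>s\<in>S. complex_of_real (exp (lam s)) * cinner s (X *v s))"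
  proof (rule sum.cong[OF refl])
    fix s assume sS: "s \<in> S"
    show "cinner s ((X ** mexp M) *v s) = complex_of_real (exp (lam s)) * cinner s (X *v s)"
      using mexp_eig[OF assms(3)[OF sS]]
      by (simp add: matrix_vector_mul_assoc[symmetric] mv_scale cinner_scale_right exp_of_real)
  qed
  finally show ?thesis by (simp add: Re_sum)
qed

lemma trace_XMXM:
  assumes "ons S" "compl S" "\<And>s. s \<in> S \<Longrightarrow> M *v s = complex_of_real (lam s) *s s"
    and hX: "hermitian X"
  shows "trace (X ** matpow M j ** X ** matpow M m)
     = (\<Sum>s\<in>S. \<Sum>t\<in>S. complex_of_real ((cmod (cinner t (X *v s)))\<^sup>2 * lam t ^ j * lam s ^ m))"
proof -
  have "trace (X ** matpow M j ** X ** matpow M m) = (\<Sum>s\<in>S. cinner s ((X ** matpow M j ** X ** matpow M m) *v s))"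
    by (rule trace_basis[OF assms(2)])
  also have "\<dots> = (\<Sum>s\<in>S. \<Sum>t\<in>S. complex_of_real ((cmod (cinner t (X *v s)))\<^sup>2 * lam t ^ j * lam s ^ m))"
  proof (rule sum.cong[OF refl])
    fix s assume sS: "s \<in> S"
    have e1: "matpow M m *v s = complex_of_real (lam s ^ m) *s s"
      using matpow_eig[OF assms(3)[OF sS]] by simp
    have "X *v s = (\<Sum>t\<in>S. cinner t (X *v s) *s t)" using assms(2) by (metis compl_def)
    have ej: "matpow M j *v t = complex_of_real (lam t ^ j) *s t" if tS: "t \<in> S" for t
      using matpow_eig[OF assms(3)[OF tS]] by simp
    have "matpow M j *v (X *v s) = (\<Sum>t\<in>S. cinner t (X *v s) *s (matpow M j *v t))"
      by (subst \<open>X *v s = _\<close>) (simp only: mv_sum mv_scale)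
    also have "\<dots> = (\<Sum>t\<in>S. (cinner t (X *v s) * complex_of_real (lam t ^ j)) *s t)"
      by (rule sum.cong[OF refl]) (simp add: ej vec_eq_iff)
    finally have "matpow M j *v (X *v s) = (\<Sum>t\<in>S. (cinner t (X *v s) * complex_of_real (lam t ^ j)) *s t)" .
    hence "X *v (matpow M j *v (X *v s)) = (\<Sum>t\<in>S. (cinner t (X *v s) * complex_of_real (lam t ^ j)) *s (X *v t))"
      by (simp add: mv_sum mv_scale)
    hence "cinner s (X *v (matpow M j *v (X *v s))) = (\<Sum>t\<in>S. cinner t (X *v s) * complex_of_real (lam t ^ j) * cinner s (X *v t))"
      by (simp add: cinner_sum_right cinner_scale_right)
    also have "\<dots> = (\<Sum>t\<in>S. complex_of_real ((cmod (cinner t (X *v s)))\<^sup>2 * lam t ^ j))"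
    proof (rule sum.cong[OF refl])
      fix t
      have "cinner s (X *v t) = cnj (cinner t (X *v s))"
        using herm_cinner[OF hX, of s t] cinner_cnj[of t "X *v s"] by simp
      moreover have h: "cinner t (X *v s) * cnj (cinner t (X *v s)) = complex_of_real ((cmod (cinner t (X *v s)))\<^sup>2)"
        by (rule complex_norm_square[symmetric])
      ultimately show "cinner t (X *v s) * complex_of_real (lam t ^ j) * cinner s (X *v t) = complex_of_real ((cmod (cinner t (X *v s)))\<^sup>2 * lam t ^ j)"
        by (simp only: of_real_mult h[symmetric] mult_ac)
    qed
    finally have key: "cinner s (X *v (matpow M j *v (X *v s))) = (\<Sum>t\<in>S. complex_of_real ((cmod (cinner t (X *v s)))\<^sup>2 * lam t ^ j))" .
    have "cinner s ((X ** matpow M j ** X ** matpow M m) *v s) = complex_of_real (lam s ^ m) * cinner s (X *v (matpow M j *v (X *v s)))"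
      by (simp add: matrix_vector_mul_assoc[symmetric] e1 mv_scale cinner_scale_right)
    also have "\<dots> = (\<Sum>t\<in>S. complex_of_real ((cmod (cinner t (X *v s)))\<^sup>2 * lam t ^ j * lam s ^ m))"
      unfolding key by (simp add: sum_distrib_left ac_simps)
    finally show "cinner s ((X ** matpow M j ** X ** matpow M m) *v s) = (\<Sum>t\<in>S. complex_of_real ((cmod (cinner t (X *v s)))\<^sup>2 * lam t ^ j * lam s ^ m))" .
  qed
  finally show ?thesis .
qed

lemma bb_mm: "bounded_bilinear (\<lambda>(A::complex^'n::finite^'n) B. A ** B)"
  unfolding bilinear_conv_bounded_bilinear[symmetric] bilinear_def
  by (auto intro!: linearI simp: matrix_add_ldistrib mm_add_r mm_scale_l mm_scale_r)

fun Dm :: "complex^'n::finite^'n \<Rightarrow> complex^'n^'n \<Rightarrow> real \<Rightarrow> nat \<Rightarrow> complex^'n^'n" where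
  "Dm B X t 0 = 0"
| "Dm B X t (Suc k) = X ** matpow (B + t *\<^sub>R X) k + (B + t *\<^sub>R X) ** Dm B X t k"

lemma matpow_deriv:
  "((\<lambda>t. matpow (B + t *\<^sub>R X) k) has_vector_derivative Dm B X t k) (at t)"
proof (induction k)
  case 0 thus ?case by (simp add: has_vector_derivative_const)
next
  case (Suc k)
  have dM: "((\<lambda>t. B + t *\<^sub>R X) has_vector_derivative X) (at t)"
    by (auto intro!: derivative_eq_intros)
  have "((\<lambda>t. (B + t *\<^sub>R X) ** matpow (B + t *\<^sub>R X) k) has_vector_derivative
      ((B + t *\<^sub>R X) ** Dm B X t k + X ** matpow (B + t *\<^sub>R X) k)) (at t)"
    using bounded_bilinear.has_vector_derivative[OF bb_mm dM Suc.IH] by simp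
  thus ?case by (simp add: add.commute)
qed

lemma bl_Re_trace: "bounded_linear (\<lambda>M::complex^'n::finite^'n. Re (trace M))"
  by (rule bounded_linear_compose[OF bounded_linear_Re bl_trace])

lemma bl_Re_trace_X: "bounded_linear (\<lambda>M::complex^'n::finite^'n. Re (trace (X ** M)))"
  by (rule bounded_linear_compose[OF bl_Re_trace bl_lmul])

lemma deriv_fk:
  "((\<lambda>t. Re (trace (matpow (B + t *\<^sub>R X) k)) / fact k) has_real_derivative
      Re (trace (Dm B X t k)) / fact k) (at t)"
proof -
  have "((\<lambda>t. Re (trace (matpow (B + t *\<^sub>R X) k))) has_vector_derivative Re (trace (Dm B X t k))) (at t)"
    by (rule bounded_linear.has_vector_derivative[OF bl_Re_trace matpow_deriv])
  hence "((\<lambda>t. Re (trace (matpow (B + t *\<^sub>R X) k))) has_real_derivative Re (trace (Dm B X t k))) (at t)"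
    by (simp add: has_real_derivative_iff_has_vector_derivative)
  thus ?thesis by (rule DERIV_cdivide)
qed

lemma deriv_gk:
  "((\<lambda>t. Re (trace (X ** matpow (B + t *\<^sub>R X) k)) / fact k) has_real_derivative
      Re (trace (X ** Dm B X t k)) / fact k) (at t)"
proof -
  have "((\<lambda>t. Re (trace (X ** matpow (B + t *\<^sub>R X) k))) has_vector_derivative Re (trace (X ** Dm B X t k))) (at t)"
    by (rule bounded_linear.has_vector_derivative[OF bl_Re_trace_X matpow_deriv])
  hence "((\<lambda>t. Re (trace (X ** matpow (B + t *\<^sub>R X) k))) has_real_derivative Re (trace (X ** Dm B X t k))) (at t)"
    by (simp add: has_real_derivative_iff_has_vector_derivative)
  thus ?thesis by (rule DERIV_cdivide)
qed

lemma matpow_add: "matpow M a ** matpow M b = matpow M (a + b)"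
  by (induction a) (simp_all add: matrix_mul_lid matrix_mul_assoc[symmetric])

lemma matpow_comm: "matpow M a ** M = M ** matpow M a"
  using matpow_add[of M a 1] matpow_add[of M 1 a] by (simp add: matrix_mul_rid add.commute)

lemma trace_sum: "trace (\<Sum>j\<in>J. F j) = (\<Sum>j\<in>J. trace (F j :: complex^'n::finite^'n))"
  by (induction J rule: infinite_finite_induct) (simp_all add: trace_add, simp_all add: trace_def)

lemma mm_sum: "(X::complex^'n::finite^'n) ** (\<Sum>j\<in>J. F j) = (\<Sum>j\<in>J. X ** F j)"
  by (induction J rule: infinite_finite_induct) (simp_all add: matrix_add_ldistrib)

lemma Dm_sum: "Dm B X t k = (\<Sum>j<k. matpow (B + t *\<^sub>R X) j ** X ** matpow (B + t *\<^sub>R X) (k - 1 - j))"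
proof (induction k)
  case 0 thus ?case by simp
next
  case (Suc k)
  let ?M = "B + t *\<^sub>R X"
  have "Dm B X t (Suc k) = X ** matpow ?M k + ?M ** (\<Sum>j<k. matpow ?M j ** X ** matpow ?M (k - 1 - j))"
    using Suc.IH by simp
  also have "?M ** (\<Sum>j<k. matpow ?M j ** X ** matpow ?M (k - 1 - j))
      = (\<Sum>j<k. matpow ?M (Suc j) ** X ** matpow ?M (k - 1 - j))"
    by (simp add: mm_sum matrix_mul_assoc)
  also have "X ** matpow ?M k + (\<Sum>j<k. matpow ?M (Suc j) ** X ** matpow ?M (k - 1 - j))
      = (\<Sum>j<Suc k. matpow ?M j ** X ** matpow ?M (Suc k - 1 - j))"
    by (subst sum.lessThan_Suc_shift) (simp add: matrix_mul_lid)
  finally show ?case .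
qed

lemma trace_Dm: "trace (Dm B X t (Suc k)) = of_nat (Suc k) * trace (X ** matpow (B + t *\<^sub>R X) k)"
proof -
  let ?M = "B + t *\<^sub>R X"
  have "trace (Dm B X t (Suc k)) = (\<Sum>j<Suc k. trace (matpow ?M j ** X ** matpow ?M (k - j)))"
    by (simp only: Dm_sum trace_sum) simp
  also have "\<dots> = (\<Sum>j<Suc k. trace (X ** matpow ?M k))"
  proof (rule sum.cong[OF refl])
    fix j assume "j \<in> {..<Suc k}"
    hence jk: "k - j + j = k" by simp
    have "trace (matpow ?M j ** X ** matpow ?M (k - j)) = trace (X ** matpow ?M (k - j) ** matpow ?M j)"
      by (metis trace_mul_sym matrix_mul_assoc)
    also have "\<dots> = trace (X ** matpow ?M k)" by (simp add: matrix_mul_assoc[symmetric] matpow_add jk)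
    finally show "trace (matpow ?M j ** X ** matpow ?M (k - j)) = trace (X ** matpow ?M k)" .
  qed
  finally show ?thesis by simp
qed

lemma trace_XDm: "trace (X ** Dm B X t k) = (\<Sum>j<k. trace (X ** matpow (B + t *\<^sub>R X) j ** X ** matpow (B + t *\<^sub>R X) (k - 1 - j)))"
  by (simp only: Dm_sum trace_sum mm_sum matrix_mul_assoc)

lemma summable_bound:
  fixes u :: "nat \<Rightarrow> real"
  assumes "\<And>k. \<bar>u k\<bar> \<le> C * (R ^ k / fact k)"
  shows "summable u"
proof (rule summable_comparison_test')
  show "summable (\<lambda>k. C * (inverse (fact k) * R ^ k))" by (intro summable_mult summable_exp)
  fix k :: nat show "norm (u k) \<le> C * (inverse (fact k) * R ^ k)"
    using assms[of k] by (simp add: field_simps)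
qed

lemma summable_bound_Suc:
  fixes u :: "nat \<Rightarrow> real"
  assumes "\<And>k. \<bar>u (Suc k)\<bar> \<le> C * (R ^ k / fact k)"
  shows "summable u"
  using summable_bound[of "\<lambda>k. u (Suc k)", OF assms] by (simp add: summable_Suc_iff)

lemma Re_trace_scaleR: "Re (trace (c *\<^sub>R P)) = c * Re (trace (P::complex^'n::finite^'n))"
  by (simp add: trace_def Re_sum sum_distrib_left)

lemma mx_M: "mx (B + t *\<^sub>R X) \<le> mx B + \<bar>t\<bar> * mx X"
  using mx_add[of B "t *\<^sub>R X"] by (simp add: mx_scaleR)

lemma mx_Mdiff: "mx ((B + x *\<^sub>R X) - (B + y *\<^sub>R X)) = \<bar>x - y\<bar> * mx X"
proof -
  have "(B + x *\<^sub>R X) - (B + y *\<^sub>R X) = (x - y) *\<^sub>R X" by (simp add: algebra_simps)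
  thus ?thesis by (simp add: mx_scaleR)
qed

lemma mx_Mdiff': "mx (x *\<^sub>R X - y *\<^sub>R X) = \<bar>x - y\<bar> * mx X"
proof -
  have "x *\<^sub>R X - y *\<^sub>R X = (x - y) *\<^sub>R X" by (simp add: algebra_simps)
  thus ?thesis by (simp add: mx_scaleR)
qed

lemma fact_Suc_div: "(of_nat (Suc m) * a) / fact (Suc m) = (a::real) / fact m"
  by (simp only: fact_Suc) (rule mult_divide_mult_cancel_left, simp)

lemma mx_Dm: "mx (Dm B X t (Suc k)) \<le> of_nat (Suc k) * mx (B + t *\<^sub>R X) ^ k * mx X"
proof (induction k)
  case 0 thus ?case by (simp add: matrix_mul_rid)
next
  case (Suc k)
  let ?M = "B + t *\<^sub>R X"
  have "mx (Dm B X t (Suc (Suc k))) \<le> mx (X ** matpow ?M (Suc k)) + mx (?M ** Dm B X t (Suc k))"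
    by (simp add: mx_add)
  also have "\<dots> \<le> mx X * mx ?M ^ Suc k + mx ?M * (of_nat (Suc k) * mx ?M ^ k * mx X)"
    by (intro add_mono mx_pow order_trans[OF mx_mult] mult_left_mono Suc.IH mx_nonneg)
  also have "\<dots> = of_nat (Suc (Suc k)) * mx ?M ^ Suc k * mx X" by (simp add: algebra_simps)
  finally show ?case .
qed

lemma Re_trace_diff_le: "\<bar>Re (trace P) - Re (trace Q)\<bar> \<le> mx (P - Q)"
  using Re_trace_le_mx[of "P - Q"] by (simp add: trace_sub)

lemma DERIV_F:
  fixes B X :: "complex^'n::finite^'n"
  shows "DERIV (\<lambda>t. Re (trace (mexp (B + t *\<^sub>R X)))) x0 :> Re (trace (X ** mexp (B + x0 *\<^sub>R X)))"
proof -
  define f where "f x k = Re (trace (matpow (B + x *\<^sub>R X) k)) / fact k" for x k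
  define f' where "f' x k = Re (trace (Dm B X x k)) / fact k" for x k
  define g where "g x k = Re (trace (X ** matpow (B + x *\<^sub>R X) k)) / fact k" for x k
  define R where "R = mx B + (\<bar>x0\<bar> + 1) * mx X"
  have R0: "R \<ge> 0" unfolding R_def by (intro add_nonneg_nonneg mult_nonneg_nonneg mx_nonneg) auto
  have RI: "mx (B + x *\<^sub>R X) \<le> R" if "x \<in> {x0 - 1<..<x0 + 1}" for x
  proof -
    have "\<bar>x\<bar> \<le> \<bar>x0\<bar> + 1" using that by auto
    hence "\<bar>x\<bar> * mx X \<le> (\<bar>x0\<bar> + 1) * mx X" by (intro mult_right_mono mx_nonneg)
    thus ?thesis using mx_M[of B x X] unfolding R_def by linarith
  qed
  have eqF: "Re (trace (mexp (B + t *\<^sub>R X))) = suminf (f t)" for t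
    unfolding mexp_def f_def
    by (simp add: bounded_linear.suminf[OF bl_Re_trace summable_mexp] Re_trace_scaleR)
  have eqG: "Re (trace (X ** mexp (B + t *\<^sub>R X))) = suminf (g t)" for t
    unfolding mexp_def g_def
    by (simp add: bounded_linear.suminf[OF bl_Re_trace_X summable_mexp] Re_trace_scaleR mm_scale_r)
  have sg: "summable (g x)" for x
  proof (rule summable_bound)
    fix k
    have "\<bar>g x k\<bar> \<le> mx (X ** matpow (B + x *\<^sub>R X) k) / fact k"
      unfolding g_def by (simp add: divide_right_mono Re_trace_le_mx)
    also have "\<dots> \<le> mx X * mx (B + x *\<^sub>R X) ^ k / fact k" by (intro divide_right_mono mx_pow) auto
    finally show "\<bar>g x k\<bar> \<le> mx X * (mx (B + x *\<^sub>R X) ^ k / fact k)" by simp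
  qed
  have f'S: "f' x (Suc k) = g x k" for x k
  proof -
    define T where "T = trace (X ** matpow (B + x *\<^sub>R X) k)"
    have h: "Re (of_nat (Suc k) * T) = real (Suc k) * Re T" by simp
    have "f' x (Suc k) = Re (of_nat (Suc k) * T) / fact (Suc k)"
      unfolding f'_def trace_Dm T_def ..
    also have "\<dots> = (real (Suc k) * Re T) / (real (Suc k) * fact k)"
      by (subst h, subst fact_Suc, rule refl)
    also have "\<dots> = g x k" unfolding g_def T_def by (rule mult_divide_mult_cancel_left) simp
    finally show ?thesis .
  qed
  have f'0: "f' x 0 = 0" for x by (simp add: f'_def trace_def)
  have sf': "summable (f' x)" for x
    using sg[of x] summable_Suc_iff[of "f' x"] by (simp add: f'S)
  have "DERIV (\<lambda>x. suminf (f x)) x0 :> suminf (f' x0)"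
  proof (rule DERIV_series'[where a="x0 - 1" and b="x0 + 1" and
        L="\<lambda>k. if k = 0 then 0 else mx X * (R ^ (k - 1) / fact (k - 1))"])
    show "DERIV (\<lambda>x. f x k) x0 :> f' x0 k" for k unfolding f_def f'_def by (rule deriv_fk)
    show "summable (f x)" for x
    proof (rule summable_bound)
      fix k
      have "\<bar>f x k\<bar> \<le> mx (matpow (B + x *\<^sub>R X) k) / fact k"
        unfolding f_def by (simp add: divide_right_mono Re_trace_le_mx)
      also have "\<dots> \<le> mx (mat 1 :: complex^'n^'n) * mx (B + x *\<^sub>R X) ^ k / fact k"
        by (intro divide_right_mono mx_pow1) auto
      finally show "\<bar>f x k\<bar> \<le> mx (mat 1 :: complex^'n^'n) * (mx (B + x *\<^sub>R X) ^ k / fact k)" by simp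
    qed
    show "x0 \<in> {x0 - 1<..<x0 + 1}" by simp
    show "summable (f' x0)" by (rule sf')
    show "summable (\<lambda>k. if k = 0 then 0 else mx X * (R ^ (k - 1) / fact (k - 1)))"
      by (rule summable_bound_Suc[where C="mx X" and R=R]) (simp add: R0 mx_nonneg)
    fix k x y assume xI: "x \<in> {x0 - 1<..<x0 + 1}" and yI: "y \<in> {x0 - 1<..<x0 + 1}"
    show "\<bar>f x k - f y k\<bar> \<le> (if k = 0 then 0 else mx X * (R ^ (k - 1) / fact (k - 1))) * \<bar>x - y\<bar>"
    proof (cases k)
      case 0 thus ?thesis by (simp add: f_def)
    next
      case (Suc m)
      have "\<bar>f x k - f y k\<bar> = \<bar>Re (trace (matpow (B + x *\<^sub>R X) k)) - Re (trace (matpow (B + y *\<^sub>R X) k))\<bar> / fact k"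
        unfolding f_def by (simp add: diff_divide_distrib[symmetric])
      also have "\<dots> \<le> mx (matpow (B + x *\<^sub>R X) k - matpow (B + y *\<^sub>R X) k) / fact k"
        by (intro divide_right_mono Re_trace_diff_le) auto
      also have "\<dots> \<le> (of_nat (Suc m) * R ^ m * (\<bar>x - y\<bar> * mx X)) / fact k"
        unfolding Suc using matpow_diff_mx[OF RI[OF xI] RI[OF yI], of m]
        by (intro divide_right_mono) (auto simp: mx_Mdiff mx_Mdiff')
      also have "\<dots> = (of_nat (Suc m) * (R ^ m * (\<bar>x - y\<bar> * mx X))) / fact (Suc m)"
        unfolding Suc by (simp only: mult.assoc)
      also have "\<dots> = R ^ m * (\<bar>x - y\<bar> * mx X) / fact m" by (rule fact_Suc_div)
      also have "\<dots> = mx X * (R ^ m / fact m) * \<bar>x - y\<bar>" by (simp add: field_simps)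
      finally show ?thesis using Suc by simp
    qed
  qed
  moreover have "suminf (f' x0) = suminf (g x0)"
    using suminf_split_head[OF sf'[of x0]] by (simp add: f'S f'0)
  ultimately show ?thesis unfolding eqF eqG by simp
qed

lemma DERIV_F1:
  fixes B X :: "complex^'n::finite^'n"
  shows "DERIV (\<lambda>t. Re (trace (X ** mexp (B + t *\<^sub>R X)))) x0 :>
           (\<Sum>k. Re (trace (X ** Dm B X x0 k)) / fact k)"
proof -
  define g where "g x k = Re (trace (X ** matpow (B + x *\<^sub>R X) k)) / fact k" for x k
  define g' where "g' x k = Re (trace (X ** Dm B X x k)) / fact k" for x k
  define R where "R = mx B + (\<bar>x0\<bar> + 1) * mx X"
  have R0: "R \<ge> 0" unfolding R_def by (intro add_nonneg_nonneg mult_nonneg_nonneg mx_nonneg) auto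
  have RI: "mx (B + x *\<^sub>R X) \<le> R" if "x \<in> {x0 - 1<..<x0 + 1}" for x
  proof -
    have "\<bar>x\<bar> \<le> \<bar>x0\<bar> + 1" using that by auto
    hence "\<bar>x\<bar> * mx X \<le> (\<bar>x0\<bar> + 1) * mx X" by (intro mult_right_mono mx_nonneg)
    thus ?thesis using mx_M[of B x X] unfolding R_def by linarith
  qed
  have eqG: "Re (trace (X ** mexp (B + t *\<^sub>R X))) = suminf (g t)" for t
    unfolding mexp_def g_def
    by (simp add: bounded_linear.suminf[OF bl_Re_trace_X summable_mexp] Re_trace_scaleR mm_scale_r)
  have "DERIV (\<lambda>x. suminf (g x)) x0 :> suminf (g' x0)"
  proof (rule DERIV_series'[where a="x0 - 1" and b="x0 + 1" and
        L="\<lambda>k. if k = 0 then 0 else mx X * mx X * (R ^ (k - 1) / fact (k - 1))"])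
    show "DERIV (\<lambda>x. g x k) x0 :> g' x0 k" for k unfolding g_def g'_def by (rule deriv_gk)
    show "summable (g x)" for x
    proof (rule summable_bound)
      fix k
      have "\<bar>g x k\<bar> \<le> mx (X ** matpow (B + x *\<^sub>R X) k) / fact k"
        unfolding g_def by (simp add: divide_right_mono Re_trace_le_mx)
      also have "\<dots> \<le> mx X * mx (B + x *\<^sub>R X) ^ k / fact k" by (intro divide_right_mono mx_pow) auto
      finally show "\<bar>g x k\<bar> \<le> mx X * (mx (B + x *\<^sub>R X) ^ k / fact k)" by simp
    qed
    show "x0 \<in> {x0 - 1<..<x0 + 1}" by simp
    show "summable (g' x0)"
    proof (rule summable_bound_Suc[where C="mx X * mx X" and R="mx (B + x0 *\<^sub>R X)"])
      fix k
      have "\<bar>g' x0 (Suc k)\<bar> \<le> mx (X ** Dm B X x0 (Suc k)) / fact (Suc k)"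
        unfolding g'_def by (simp add: divide_right_mono Re_trace_le_mx)
      also have "\<dots> \<le> (mx X * (of_nat (Suc k) * mx (B + x0 *\<^sub>R X) ^ k * mx X)) / fact (Suc k)"
        by (intro divide_right_mono order_trans[OF mx_mult] mult_left_mono mx_Dm mx_nonneg) auto
      also have "\<dots> = (of_nat (Suc k) * (mx X * mx X * mx (B + x0 *\<^sub>R X) ^ k)) / fact (Suc k)"
        by (simp only: ac_simps)
      also have "\<dots> = mx X * mx X * (mx (B + x0 *\<^sub>R X) ^ k / fact k)"
        by (simp only: fact_Suc_div) simp
      finally show "\<bar>g' x0 (Suc k)\<bar> \<le> mx X * mx X * (mx (B + x0 *\<^sub>R X) ^ k / fact k)" .
    qed
    show "summable (\<lambda>k. if k = 0 then 0 else mx X * mx X * (R ^ (k - 1) / fact (k - 1)))"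
      by (rule summable_bound_Suc[where C="mx X * mx X" and R=R]) (simp add: R0 mx_nonneg)
    fix k x y assume xI: "x \<in> {x0 - 1<..<x0 + 1}" and yI: "y \<in> {x0 - 1<..<x0 + 1}"
    show "\<bar>g x k - g y k\<bar> \<le> (if k = 0 then 0 else mx X * mx X * (R ^ (k - 1) / fact (k - 1))) * \<bar>x - y\<bar>"
    proof (cases k)
      case 0 thus ?thesis by (simp add: g_def)
    next
      case (Suc m)
      have "\<bar>g x k - g y k\<bar> = \<bar>Re (trace (X ** matpow (B + x *\<^sub>R X) k)) - Re (trace (X ** matpow (B + y *\<^sub>R X) k))\<bar> / fact k"
        unfolding g_def by (simp add: diff_divide_distrib[symmetric])
      also have "\<dots> \<le> mx (X ** matpow (B + x *\<^sub>R X) k - X ** matpow (B + y *\<^sub>R X) k) / fact k"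
        by (intro divide_right_mono Re_trace_diff_le) auto
      also have "\<dots> \<le> (mx X * (of_nat (Suc m) * R ^ m * (\<bar>x - y\<bar> * mx X))) / fact k"
      proof -
        have "mx (X ** matpow (B + x *\<^sub>R X) k - X ** matpow (B + y *\<^sub>R X) k)
            \<le> mx X * mx (matpow (B + x *\<^sub>R X) k - matpow (B + y *\<^sub>R X) k)"
          by (simp only: mm_diff_l[symmetric] mx_mult)
        also have "\<dots> \<le> mx X * (of_nat (Suc m) * R ^ m * (\<bar>x - y\<bar> * mx X))"
          unfolding Suc using matpow_diff_mx[OF RI[OF xI] RI[OF yI], of m]
          by (intro mult_left_mono mx_nonneg) (auto simp: mx_Mdiff mx_Mdiff')
        finally show ?thesis by (intro divide_right_mono) auto
      qed
      also have "\<dots> = (of_nat (Suc m) * (mx X * mx X * R ^ m * \<bar>x - y\<bar>)) / fact (Suc m)"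
        unfolding Suc by (simp only: ac_simps)
      also have "\<dots> = mx X * mx X * R ^ m * \<bar>x - y\<bar> / fact m" by (rule fact_Suc_div)
      also have "\<dots> = mx X * mx X * (R ^ m / fact m) * \<bar>x - y\<bar>" by (simp add: field_simps)
      finally show ?thesis using Suc by simp
    qed
  qed
  thus ?thesis unfolding eqG g'_def by simp
qed

definition hh :: "nat \<Rightarrow> real \<Rightarrow> real \<Rightarrow> real" where
  "hh k a b = (\<Sum>i<k. b ^ (k - Suc i) * a ^ i)"

lemma hh_bound: "\<bar>hh k a b\<bar> \<le> of_nat k * max \<bar>a\<bar> \<bar>b\<bar> ^ (k - 1)"
proof -
  let ?R = "max \<bar>a\<bar> \<bar>b\<bar>"
  have "\<bar>hh k a b\<bar> \<le> (\<Sum>i<k. \<bar>b\<bar> ^ (k - Suc i) * \<bar>a\<bar> ^ i)"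
    unfolding hh_def by (rule order_trans[OF sum_abs]) (simp add: abs_mult power_abs)
  also have "\<dots> \<le> (\<Sum>i<k. ?R ^ (k - 1))"
  proof (rule sum_mono)
    fix i assume "i \<in> {..<k}"
    hence "k - Suc i + i = k - 1" by auto
    have "\<bar>b\<bar> ^ (k - Suc i) * \<bar>a\<bar> ^ i \<le> ?R ^ (k - Suc i) * ?R ^ i"
      by (intro mult_mono power_mono) auto
    also have "\<dots> = ?R ^ (k - 1)" by (simp add: power_add[symmetric] \<open>k - Suc i + i = k - 1\<close>)
    finally show "\<bar>b\<bar> ^ (k - Suc i) * \<bar>a\<bar> ^ i \<le> ?R ^ (k - 1)" .
  qed
  finally show ?thesis by simp
qed

lemma hh_summable: "summable (\<lambda>k. hh k a b / fact k)"
proof (rule summable_bound_Suc[where C=1 and R="max \<bar>a\<bar> \<bar>b\<bar>"])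
  fix k
  have "\<bar>hh (Suc k) a b / fact (Suc k)\<bar> \<le> (of_nat (Suc k) * max \<bar>a\<bar> \<bar>b\<bar> ^ k) / fact (Suc k)"
    using hh_bound[of "Suc k" a b] by (simp add: abs_divide divide_right_mono del: fact_Suc)
  also have "\<dots> = max \<bar>a\<bar> \<bar>b\<bar> ^ k / fact k" by (rule fact_Suc_div)
  finally show "\<bar>hh (Suc k) a b / fact (Suc k)\<bar> \<le> 1 * (max \<bar>a\<bar> \<bar>b\<bar> ^ k / fact k)" by simp
qed

lemma exp_sums_real: "(\<lambda>k. (a::real) ^ k / fact k) sums exp a"
  using exp_converges[of a] by (simp add: divide_inverse mult.commute)

lemma hh_diag: "(\<Sum>k. hh k a a / fact k) = exp a"
proof -
  have hS: "hh (Suc k) a a / fact (Suc k) = a ^ k / fact k" for k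
  proof -
    have "hh (Suc k) a a = of_nat (Suc k) * a ^ k"
      unfolding hh_def by (simp add: power_add[symmetric])
    thus ?thesis by (simp only: fact_Suc_div)
  qed
  have "(\<Sum>k. hh k a a / fact k) = (\<Sum>k. hh (Suc k) a a / fact (Suc k)) + hh 0 a a / fact 0"
    using suminf_split_head[OF hh_summable[of a a]] by simp
  also have "\<dots> = (\<Sum>k. a ^ k / fact k)"
  proof -
    have h0: "hh 0 a a = 0" by (simp add: hh_def)
    show ?thesis by (simp only: hS h0)
  qed
  also have "\<dots> = exp a" using sums_unique[OF exp_sums_real[of a]] by simp
  finally show ?thesis .
qed

lemma hh_offdiag: "(a - b) * (\<Sum>k. hh k a b / fact k) = exp a - exp b"
proof -
  have "(a - b) * (\<Sum>k. hh k a b / fact k) = (\<Sum>k. (a - b) * (hh k a b / fact k))"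
    by (rule suminf_mult[OF hh_summable, symmetric])
  also have "\<dots> = (\<Sum>k. a ^ k / fact k - b ^ k / fact k)"
    unfolding hh_def
    by (rule suminf_cong) (simp only: times_divide_eq_right power_diff_sumr2[symmetric] diff_divide_distrib)
  also have "\<dots> = exp a - exp b"
    using sums_unique[OF sums_diff[OF exp_sums_real[of a] exp_sums_real[of b]]] by simp
  finally show ?thesis .
qed

lemma core_ineq:
  assumes "(d::real) \<ge> 0"
  shows "2 * (exp d - 1) \<le> d * (exp d + 1)"
proof -
  define g where "g x = x * (exp x + 1) - 2 * (exp x - 1)" for x :: real
  have "g 0 \<le> g d"
  proof (rule DERIV_nonneg_imp_nondecreasing[OF assms])
    fix x :: real assume "0 \<le> x" "x \<le> d"
    have "DERIV g x :> (exp x + 1) + x * exp x - 2 * exp x"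
      unfolding g_def by (auto intro!: derivative_eq_intros)
    moreover have "(exp x + 1) + x * exp x - 2 * exp x \<ge> 0"
    proof -
      have "1 + (- x) \<le> exp (- x)" by (rule exp_ge_add_one_self)
      hence "exp x * (1 - x) \<le> exp x * exp (- x)" by (intro mult_left_mono) auto
      hence "exp x * (1 - x) \<le> 1" by (simp add: exp_minus)
      thus ?thesis by (simp add: algebra_simps)
    qed
    ultimately show "\<exists>y. DERIV g x :> y \<and> y \<ge> 0" by blast
  qed
  thus ?thesis by (simp add: g_def)
qed

lemma L_bound: "(\<Sum>k. hh k a b / fact k) \<le> (exp a + exp b) / 2"
proof -
  have main: "V \<le> (exp a + exp b) / 2"
    if lt: "b < a" and off: "(a - b) * V = exp a - exp b" for a b V :: real
  proof -
    define d where "d = a - b"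
    have d0: "d > 0" using lt by (simp add: d_def)
    have ea: "exp a = exp b * exp d" by (simp add: d_def exp_add[symmetric])
    have "2 * (exp d - 1) \<le> d * (exp d + 1)" using core_ineq d0 by simp
    hence "exp b * (2 * (exp d - 1)) \<le> exp b * (d * (exp d + 1))" by (intro mult_left_mono) auto
    hence "2 * (exp a - exp b) \<le> d * (exp a + exp b)" by (simp add: ea algebra_simps)
    hence "2 * (d * V) \<le> d * (exp a + exp b)" using off by (simp add: d_def)
    hence "d * (2 * V) \<le> d * (exp a + exp b)" by (simp add: algebra_simps)
    hence "2 * V \<le> exp a + exp b" using d0 by (simp add: mult_le_cancel_left_pos)
    thus ?thesis by simp
  qed
  consider "a = b" | "b < a" | "a < b" by linarith
  thus ?thesis
  proof cases
    case 1 thus ?thesis by (simp add: hh_diag)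
  next
    case 2 thus ?thesis using main hh_offdiag by blast
  next
    case 3
    have "(b - a) * (\<Sum>k. hh k a b / fact k) = exp b - exp a"
      using hh_offdiag[of a b] by (simp add: algebra_simps)
    from main[OF 3 this] show ?thesis by (simp add: add.commute)
  qed
qed

lemma F2_bound:
  fixes B X :: "complex^'n::finite^'n"
  assumes hX: "hermitian X" and S: "ons S" "compl S"
    and eig: "\<And>s. s \<in> S \<Longrightarrow> (B + x0 *\<^sub>R X) *v s = complex_of_real (lam s) *s s"
  shows "(\<Sum>k. Re (trace (X ** Dm B X x0 k)) / fact k) \<le> (\<Sum>s\<in>S. exp (lam s) * Re (cinner (X *v s) (X *v s)))"
proof -
  define w where "w s t = (cmod (cinner t (X *v s)))\<^sup>2" for s t
  have w0: "w s t \<ge> 0" for s t by (simp add: w_def)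
  have tk: "Re (trace (X ** Dm B X x0 k)) / fact k = (\<Sum>s\<in>S. \<Sum>t\<in>S. w s t * (hh k (lam t) (lam s) / fact k))" for k
  proof -
    have "trace (X ** Dm B X x0 k) = (\<Sum>j<k. \<Sum>s\<in>S. \<Sum>t\<in>S. complex_of_real (w s t * lam t ^ j * lam s ^ (k - 1 - j)))"
      unfolding trace_XDm w_def using trace_XMXM[OF S eig hX] by simp
    hence "Re (trace (X ** Dm B X x0 k)) = (\<Sum>j<k. \<Sum>s\<in>S. \<Sum>t\<in>S. w s t * lam t ^ j * lam s ^ (k - 1 - j))"
      by (simp add: Re_sum)
    also have "\<dots> = (\<Sum>s\<in>S. \<Sum>t\<in>S. \<Sum>j<k. w s t * lam t ^ j * lam s ^ (k - 1 - j))" by (rule swap3)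
    also have "\<dots> = (\<Sum>s\<in>S. \<Sum>t\<in>S. w s t * hh k (lam t) (lam s))"
      unfolding hh_def by (intro sum.cong refl) (simp add: sum_distrib_left ac_simps)
    finally show ?thesis by (simp add: sum_divide_distrib)
  qed
  have "(\<Sum>k. Re (trace (X ** Dm B X x0 k)) / fact k) = (\<Sum>k. \<Sum>s\<in>S. \<Sum>t\<in>S. w s t * (hh k (lam t) (lam s) / fact k))"
    using tk by simp
  also have "\<dots> = (\<Sum>s\<in>S. \<Sum>t\<in>S. w s t * (\<Sum>k. hh k (lam t) (lam s) / fact k))"
  proof -
    have "(\<Sum>k. \<Sum>s\<in>S. \<Sum>t\<in>S. w s t * (hh k (lam t) (lam s) / fact k))
        = (\<Sum>s\<in>S. \<Sum>k. \<Sum>t\<in>S. w s t * (hh k (lam t) (lam s) / fact k))"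
      by (intro suminf_sum summable_sum summable_mult hh_summable)
    also have "\<dots> = (\<Sum>s\<in>S. \<Sum>t\<in>S. \<Sum>k. w s t * (hh k (lam t) (lam s) / fact k))"
      by (intro sum.cong refl suminf_sum summable_mult hh_summable)
    also have "\<dots> = (\<Sum>s\<in>S. \<Sum>t\<in>S. w s t * (\<Sum>k. hh k (lam t) (lam s) / fact k))"
      by (intro sum.cong refl suminf_mult hh_summable)
    finally show ?thesis .
  qed
  also have "\<dots> \<le> (\<Sum>s\<in>S. \<Sum>t\<in>S. w s t * ((exp (lam t) + exp (lam s)) / 2))"
    by (intro sum_mono mult_left_mono L_bound w0)
  also have "\<dots> = (\<Sum>s\<in>S. exp (lam s) * (\<Sum>t\<in>S. w s t))"
  proof -
    have sym: "w s t = w t s" for s t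
    proof -
      have "cinner t (X *v s) = cnj (cinner s (X *v t))"
        using herm_cinner[OF hX, of t s] cinner_cnj[of "X *v t" s] by simp
      thus ?thesis by (simp add: w_def)
    qed
    have A: "(\<Sum>s\<in>S. \<Sum>t\<in>S. w s t * exp (lam t)) = (\<Sum>s\<in>S. exp (lam s) * (\<Sum>t\<in>S. w s t))"
    proof -
      have "(\<Sum>s\<in>S. \<Sum>t\<in>S. w s t * exp (lam t)) = (\<Sum>t\<in>S. \<Sum>s\<in>S. w s t * exp (lam t))" by (rule sum.swap)
      also have "\<dots> = (\<Sum>t\<in>S. exp (lam t) * (\<Sum>s\<in>S. w t s))" by (simp add: sym sum_distrib_left mult.commute)
      finally show ?thesis .
    qed
    have B: "(\<Sum>s\<in>S. \<Sum>t\<in>S. w s t * exp (lam s)) = (\<Sum>s\<in>S. exp (lam s) * (\<Sum>t\<in>S. w s t))"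
      by (simp add: sum_distrib_left mult.commute)
    have "(\<Sum>s\<in>S. \<Sum>t\<in>S. w s t * ((exp (lam t) + exp (lam s)) / 2))
        = ((\<Sum>s\<in>S. \<Sum>t\<in>S. w s t * exp (lam t)) + (\<Sum>s\<in>S. \<Sum>t\<in>S. w s t * exp (lam s))) / 2"
      by (simp add: distrib_left sum.distrib add_divide_distrib sum_divide_distrib)
    thus ?thesis using A B by simp
  qed
  also have "\<dots> = (\<Sum>s\<in>S. exp (lam s) * Re (cinner (X *v s) (X *v s)))"
    using parseval_Re[OF S] by (simp add: w_def)
  finally show ?thesis .
qed

definition outer :: "complex^'n::finite \<Rightarrow> complex^'n^'n" where
  "outer s = (\<chi> i j. s$i * cnj (s$j))"

lemma outer_mv: "outer s *v x = cinner s x *s s"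
  by (simp add: vec_eq_iff outer_def matrix_vector_mult_def cinner_def sum_distrib_left ac_simps)

lemma smult_sum: "(c::complex) *s (\<Sum>s\<in>S. f s) = (\<Sum>s\<in>S. c *s (f s :: complex^'n::finite))"
  by (simp add: vec_eq_iff sum_component sum_distrib_left)

lemma psd_quad: "psd A \<Longrightarrow> Re (cinner x (A *v x)) \<ge> 0"
  unfolding psd_def cinner_def by blast

lemma mlog_herm:
  fixes \<rho> :: "complex^'n::finite^'n"
  assumes psd: "psd \<rho>" and inv: "invertible \<rho>"
  shows "hermitian (mlog \<rho>)"
proof -
  have hr: "hermitian \<rho>" using psd by (simp add: psd_def)
  obtain S mu where S: "ons S" "compl S" and eS: "\<And>s. s \<in> S \<Longrightarrow> \<rho> *v s = complex_of_real (mu s) *s s"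
    using eigbasis[OF hr] by metis
  have mupos: "mu s > 0" if sS: "s \<in> S" for s
  proof -
    have c1: "cinner s s = 1" using S sS by (simp add: ons_def)
    have "cinner s (\<rho> *v s) = complex_of_real (mu s)" using eS[OF sS] c1 by (simp add: cinner_scale_right)
    hence ge: "mu s \<ge> 0" using psd_quad[OF psd, of s] by simp
    have "mu s \<noteq> 0"
    proof
      assume "mu s = 0"
      hence "\<rho> *v s = 0" using eS[OF sS] by simp
      moreover obtain \<rho>' where "\<rho>' ** \<rho> = mat 1" using inv unfolding invertible_def by blast
      ultimately have "s = 0" by (metis matrix_vector_mul_assoc matrix_vector_mul_lid matrix_vector_mult_0_right)
      thus False using c1 by simp
    qed
    thus ?thesis using ge by simp
  qed
  define Hm where "Hm = (\<Sum>s\<in>S. ln (mu s) *\<^sub>R outer s)"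
  have Hm_mv: "Hm *v x = (\<Sum>s\<in>S. complex_of_real (ln (mu s)) *s (cinner s x *s s))" for x
    unfolding Hm_def
    by (simp add: linear_sum[OF bounded_linear.linear[OF bl_mv]] o_def mv_scaleR_mat outer_mv
        scaleR_vec_conv)
  have Hm_eig: "Hm *v t = complex_of_real (ln (mu t)) *s t" if tS: "t \<in> S" for t
  proof -
    have "Hm *v t = (\<Sum>s\<in>S. (complex_of_real (ln (mu s)) * cinner s t) *s s)"
      unfolding Hm_mv by (simp add: vec_eq_iff)
    also have "\<dots> = (\<Sum>s\<in>S. (if s = t then complex_of_real (ln (mu t)) else 0) *s s)"
      using S(1) tS by (intro sum.cong refl) (auto simp: ons_def)
    also have "\<dots> = complex_of_real (ln (mu t)) *s t"
      using S(1) tS by (simp add: if_distrib[of "\<lambda>c. c *s _"] sum.delta ons_def cong: if_cong)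
    finally show ?thesis .
  qed
  have Hm_herm: "hermitian Hm"
    unfolding hermitian_def adj_def Hm_def
    by (simp add: vec_eq_iff sum_component outer_def mult.commute)
  have Hm_exp: "mexp Hm = \<rho>"
  proof (rule mat_eq_basis[OF S(2)], intro ballI)
    fix t assume tS: "t \<in> S"
    show "mexp Hm *v t = \<rho> *v t"
      using mexp_eig[OF Hm_eig[OF tS]] eS[OF tS] mupos[OF tS] by (simp add: exp_of_real)
  qed
  have uniq: "H' = Hm" if hH': "hermitian H'" and eH': "mexp H' = \<rho>" for H'
  proof -
    obtain T nu where T: "ons T" "compl T" and eT: "\<And>t. t \<in> T \<Longrightarrow> H' *v t = complex_of_real (nu t) *s t"
      using eigbasis[OF hH'] by metis
    show ?thesis
    proof (rule mat_eq_basis[OF T(2)], intro ballI)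
      fix t assume tT: "t \<in> T"
      have rt: "\<rho> *v t = complex_of_real (exp (nu t)) *s t"
        using mexp_eig[OF eT[OF tT]] eH' by (simp add: exp_of_real)
      have coef: "complex_of_real (ln (mu s)) * cinner s t = complex_of_real (nu t) * cinner s t"
        if sS: "s \<in> S" for s
      proof (cases "cinner s t = 0")
        case True thus ?thesis by simp
      next
        case False
        have "cinner s (\<rho> *v t) = cinner (\<rho> *v s) t" using herm_cinner[OF hr] by simp
        hence "complex_of_real (exp (nu t)) * cinner s t = complex_of_real (mu s) * cinner s t"
          by (simp add: rt eS[OF sS] cinner_scale_right cinner_scale_left)
        hence "mu s = exp (nu t)" using False by simp
        thus ?thesis by simp
      qed
      have "Hm *v t = (\<Sum>s\<in>S. (complex_of_real (ln (mu s)) * cinner s t) *s s)"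
        unfolding Hm_mv by (simp add: vec_eq_iff)
      also have "\<dots> = (\<Sum>s\<in>S. complex_of_real (nu t) *s (cinner s t *s s))"
        by (intro sum.cong refl) (simp add: coef vec_eq_iff mult.assoc)
      also have "\<dots> = complex_of_real (nu t) *s (\<Sum>s\<in>S. cinner s t *s s)"
        by (simp only: smult_sum)
      also have "\<dots> = complex_of_real (nu t) *s t"
        using S(2) by (metis compl_def)
      finally show "H' *v t = Hm *v t" using eT[OF tT] by simp
    qed
  qed
  have "\<exists>!H. hermitian H \<and> mexp H = \<rho>" using Hm_herm Hm_exp uniq by blast
  hence "hermitian (THE H. hermitian H \<and> mexp H = \<rho>) \<and> mexp (THE H. hermitian H \<and> mexp H = \<rho>) = \<rho>"
    by (rule theI')
  thus ?thesis unfolding mlog_def by simp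
qed

lemma aux_abs: "(m::real) \<le> g \<Longrightarrow> g \<le> M \<Longrightarrow> \<bar>g - (M + m) / 2\<bar> \<le> (M - m) / 2"
  unfolding abs_le_iff by (auto simp: field_simps)

lemma G_bound:
  fixes G :: "complex^'n::finite^'n"
  assumes hG: "hermitian G" and y1: "cinner y y = 1"
  shows "Re (cinner (G *v y) (G *v y)) - 2 * ((lambda_max G + lambda_min G) / 2) * Re (cinner y (G *v y))
           + ((lambda_max G + lambda_min G) / 2)\<^sup>2 \<le> (lambda_max G - lambda_min G)\<^sup>2 / 4"
proof -
  obtain T gam where T: "ons T" "compl T" and eT: "\<And>t. t \<in> T \<Longrightarrow> G *v t = complex_of_real (gam t) *s t"
    using eigbasis[OF hG] by metis
  have finT: "finite T" using T(1) by (simp add: ons_def)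
  have sub: "real_eigenvalues G \<subseteq> gam ` T"
  proof
    fix l assume "l \<in> real_eigenvalues G"
    then obtain v where v0: "v \<noteq> 0" and ev: "G *v v = complex_of_real l *s v"
      unfolding real_eigenvalues_def by blast
    have "\<exists>t\<in>T. cinner t v \<noteq> 0"
    proof (rule ccontr)
      assume "\<not> (\<exists>t\<in>T. cinner t v \<noteq> 0)"
      hence "(\<Sum>t\<in>T. cinner t v *s t) = 0" by simp
      thus False using v0 T(2) by (metis compl_def)
    qed
    then obtain t where tT: "t \<in> T" and nz: "cinner t v \<noteq> 0" by blast
    have "cinner t (G *v v) = cinner (G *v t) v" using herm_cinner[OF hG] by simp
    hence "complex_of_real l * cinner t v = complex_of_real (gam t) * cinner t v"
      by (simp add: ev eT[OF tT] cinner_scale_right cinner_scale_left)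
    hence "l = gam t" using nz by simp
    thus "l \<in> gam ` T" using tT by blast
  qed
  have finE: "finite (real_eigenvalues G)" using finite_subset[OF sub] finT by blast
  have mem: "gam t \<in> real_eigenvalues G" if tT: "t \<in> T" for t
  proof -
    have "t \<noteq> 0" using T(1) tT by (auto simp: ons_def)
    thus ?thesis unfolding real_eigenvalues_def using eT[OF tT] by blast
  qed
  define c where "c = (lambda_max G + lambda_min G) / 2"
  define D where "D = (lambda_max G - lambda_min G)\<^sup>2 / 4"
  have gD: "(gam t - c)\<^sup>2 \<le> D" if tT: "t \<in> T" for t
  proof -
    have lo: "lambda_min G \<le> gam t" unfolding lambda_min_def using finE mem[OF tT] by (rule Min_le)
    have hi: "gam t \<le> lambda_max G" unfolding lambda_max_def using finE mem[OF tT] by (rule Max_ge)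
    have "\<bar>gam t - c\<bar> \<le> (lambda_max G - lambda_min G) / 2"
      unfolding c_def by (rule aux_abs[OF lo hi])
    hence "\<bar>gam t - c\<bar>\<^sup>2 \<le> ((lambda_max G - lambda_min G) / 2)\<^sup>2" by (rule power_mono) simp
    thus ?thesis unfolding D_def by (simp add: power_divide)
  qed
  define \<beta> where "\<beta> t = cinner t y" for t
  have cG: "cinner t (G *v y) = complex_of_real (gam t) * \<beta> t" if tT: "t \<in> T" for t
  proof -
    have "cinner t (G *v y) = cinner (G *v t) y" using herm_cinner[OF hG] by simp
    thus ?thesis by (simp add: eT[OF tT] cinner_scale_left \<beta>_def)
  qed
  have a: "Re (cinner (G *v y) (G *v y)) = (\<Sum>t\<in>T. (gam t)\<^sup>2 * (cmod (\<beta> t))\<^sup>2)"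
    using parseval_Re[OF T, of "G *v y"] by (simp add: cG norm_mult power_mult_distrib)
  have "cinner y (G *v y) = cinner y (\<Sum>t\<in>T. cinner t (G *v y) *s t)" using T(2) by (metis compl_def)
  also have "\<dots> = (\<Sum>t\<in>T. cinner t (G *v y) * cinner y t)" by (simp add: cinner_sum_right cinner_scale_right)
  also have "\<dots> = (\<Sum>t\<in>T. complex_of_real (gam t * (cmod (\<beta> t))\<^sup>2))"
  proof (rule sum.cong[OF refl])
    fix t assume tT: "t \<in> T"
    have e: "cinner y t = cnj (\<beta> t)" by (simp add: \<beta>_def cinner_cnj[of y t])
    have h: "\<beta> t * cnj (\<beta> t) = complex_of_real ((cmod (\<beta> t))\<^sup>2)"
      by (rule complex_norm_square[symmetric])
    show "cinner t (G *v y) * cinner y t = complex_of_real (gam t * (cmod (\<beta> t))\<^sup>2)"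
      by (simp only: e cG[OF tT] mult.assoc h of_real_mult)
  qed
  finally have b: "Re (cinner y (G *v y)) = (\<Sum>t\<in>T. gam t * (cmod (\<beta> t))\<^sup>2)" by (simp add: Re_sum)
  have one: "(\<Sum>t\<in>T. (cmod (\<beta> t))\<^sup>2) = 1"
    using parseval_Re[OF T, of y] y1 by (simp add: \<beta>_def)
  have "Re (cinner (G *v y) (G *v y)) - 2 * c * Re (cinner y (G *v y)) + c\<^sup>2
      = (\<Sum>t\<in>T. (cmod (\<beta> t))\<^sup>2 * (gam t - c)\<^sup>2)"
  proof -
    have "(\<Sum>t\<in>T. (cmod (\<beta> t))\<^sup>2 * (gam t - c)\<^sup>2)
        = (\<Sum>t\<in>T. (gam t)\<^sup>2 * (cmod (\<beta> t))\<^sup>2) - 2 * c * (\<Sum>t\<in>T. gam t * (cmod (\<beta> t))\<^sup>2)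
          + c\<^sup>2 * (\<Sum>t\<in>T. (cmod (\<beta> t))\<^sup>2)"
      by (simp add: power2_diff sum.distrib sum_subtractf sum_distrib_left algebra_simps)
    thus ?thesis using a b one by simp
  qed
  also have "\<dots> \<le> (\<Sum>t\<in>T. (cmod (\<beta> t))\<^sup>2 * D)"
    by (intro sum_mono mult_left_mono gD) auto
  also have "\<dots> = D" using one by (simp add: sum_distrib_right[symmetric])
  finally show ?thesis unfolding c_def D_def .
qed

lemma herm_uminus: "hermitian A \<Longrightarrow> hermitian (- A)"
  by (simp add: hermitian_def adj_def vec_eq_iff)

lemma herm_add: "hermitian A \<Longrightarrow> hermitian B \<Longrightarrow> hermitian (A + B)"
  by (simp add: hermitian_def adj_def vec_eq_iff)

lemma herm_scaleR: "hermitian A \<Longrightarrow> hermitian ((c::real) *\<^sub>R A)"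
  by (simp add: hermitian_def adj_def vec_eq_iff)

lemma mv_neg: "(- A) *v x = - ((A::complex^'n::finite^'n) *v x)"
  by (simp add: vec_eq_iff matrix_vector_mult_def sum_negf)

lemma cinner_neg_left: "cinner (- x) y = - cinner x y"
  by (simp add: cinner_def sum_negf)

lemma cinner_neg_right: "cinner x (- y) = - cinner x y"
  by (simp add: cinner_def sum_negf)

lemma final_alg:
  fixes Z Y Ea F2 D c :: real
  assumes Z0: "Z > 0" and F2: "F2 \<le> Ea" and Ea: "Ea \<le> D * Z + 2 * c * Y - c\<^sup>2 * Z"
  shows "(F2 * Z - (- Y) * (- Y)) / (Z * Z) \<le> D"
proof -
  have "F2 * Z \<le> Ea * Z" using F2 Z0 by (simp add: mult_right_mono)
  also have "\<dots> \<le> (D * Z + 2 * c * Y - c\<^sup>2 * Z) * Z" using Ea Z0 by (simp add: mult_right_mono)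
  finally have "F2 * Z - Y * Y \<le> (D * Z + 2 * c * Y - c\<^sup>2 * Z) * Z - Y * Y" by simp
  also have "\<dots> = D * (Z * Z) - (Y - c * Z)\<^sup>2" by (simp add: power2_eq_square algebra_simps)
  also have "\<dots> \<le> D * (Z * Z)" by simp
  finally have "F2 * Z - (- Y) * (- Y) \<le> D * (Z * Z)" by simp
  thus ?thesis using Z0 by (simp add: pos_divide_le_eq)
qed

theorem corollary4:
  fixes f :: "complex^'n::finite^'n \<Rightarrow> real"
    and \<rho> G :: "complex^'n^'n"
  assumes f_convex: "convex_on {A. hermitian A} f"
    and rho_density: "\<rho> \<in> density"
    and rho_nonsingular: "invertible \<rho>"
    and G_hermitian: "hermitian G"
    and f_grad: "(f has_derivative (\<lambda>H. hs_inner G H)) (at \<rho> within {A. hermitian A})"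
  shows "\<forall>\<alpha>::real.
           deriv (deriv (\<lambda>a. ln (Re (trace (mexp (mlog \<rho> - a *\<^sub>R G)))))) \<alpha>
             \<le> (lambda_max G - lambda_min G)\<^sup>2 / 4"
proof
  fix \<alpha> :: real
  have psd: "psd \<rho>" using rho_density by (simp add: density_def)
  define H where "H = mlog \<rho>"
  have hH: "hermitian H" unfolding H_def by (rule mlog_herm[OF psd rho_nonsingular])
  define X where "X = - G"
  have hX: "hermitian X" unfolding X_def by (rule herm_uminus[OF G_hermitian])
  have hM: "hermitian (H + a *\<^sub>R X)" for a by (intro herm_add herm_scaleR hH hX)
  have eqM: "mlog \<rho> - a *\<^sub>R G = H + a *\<^sub>R X" for a by (simp add: H_def X_def)
  define Fr where "Fr a = Re (trace (mexp (H + a *\<^sub>R X)))" for a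
  define F1 where "F1 a = Re (trace (X ** mexp (H + a *\<^sub>R X)))" for a
  define F2 where "F2 a = (\<Sum>k. Re (trace (X ** Dm H X a k)) / fact k)" for a
  have Frpos: "Fr a > 0" for a
  proof -
    obtain S lam where S: "ons S" "compl S" and eS: "\<And>s. s \<in> S \<Longrightarrow> (H + a *\<^sub>R X) *v s = complex_of_real (lam s) *s s"
      using eigbasis[OF hM] by metis
    have "Fr a = (\<Sum>s\<in>S. exp (lam s))" unfolding Fr_def by (rule Re_trace_mexp[OF S eS])
    moreover have "finite S" "S \<noteq> {}" using S compl_nonempty by (auto simp: ons_def)
    ultimately show ?thesis by (simp add: sum_pos)
  qed
  have dFr: "DERIV Fr a :> F1 a" for a unfolding Fr_def F1_def by (rule DERIV_F)
  have dF1: "DERIV F1 a :> F2 a" for a unfolding F1_def F2_def by (rule DERIV_F1)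
  have phi: "(\<lambda>a. ln (Re (trace (mexp (mlog \<rho> - a *\<^sub>R G))))) = (\<lambda>a. ln (Fr a))"
    by (simp add: eqM Fr_def)
  have d1: "DERIV (\<lambda>a. ln (Fr a)) a :> F1 a / Fr a" for a
    using DERIV_chain2[OF DERIV_ln[OF Frpos[of a]] dFr[of a]] by (simp add: divide_inverse mult.commute)
  have dphi: "deriv (\<lambda>a. ln (Fr a)) = (\<lambda>a. F1 a / Fr a)"
    using d1 DERIV_imp_deriv by blast
  have d2: "DERIV (\<lambda>a. F1 a / Fr a) \<alpha> :> (F2 \<alpha> * Fr \<alpha> - F1 \<alpha> * F1 \<alpha>) / (Fr \<alpha> * Fr \<alpha>)"
    using DERIV_divide[OF dF1 dFr] Frpos[of \<alpha>] by simp
  have dd: "deriv (deriv (\<lambda>a. ln (Re (trace (mexp (mlog \<rho> - a *\<^sub>R G)))))) \<alpha>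
      = (F2 \<alpha> * Fr \<alpha> - F1 \<alpha> * F1 \<alpha>) / (Fr \<alpha> * Fr \<alpha>)"
    unfolding phi dphi using d2 DERIV_imp_deriv by blast
  obtain S lam where S: "ons S" "compl S" and eS: "\<And>s. s \<in> S \<Longrightarrow> (H + \<alpha> *\<^sub>R X) *v s = complex_of_real (lam s) *s s"
    using eigbasis[OF hM] by metis
  define c where "c = (lambda_max G + lambda_min G) / 2"
  define D where "D = (lambda_max G - lambda_min G)\<^sup>2 / 4"
  define Y where "Y = (\<Sum>s\<in>S. exp (lam s) * Re (cinner s (G *v s)))"
  define Ea where "Ea = (\<Sum>s\<in>S. exp (lam s) * Re (cinner (G *v s) (G *v s)))"
  have Z: "Fr \<alpha> = (\<Sum>s\<in>S. exp (lam s))" unfolding Fr_def by (rule Re_trace_mexp[OF S eS])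
  have Y: "F1 \<alpha> = - Y" unfolding F1_def Y_def
    using Re_trace_X_mexp[OF S eS, of X]
    by (simp add: X_def mv_neg cinner_neg_right sum_negf)
  have F2le: "F2 \<alpha> \<le> Ea" unfolding F2_def Ea_def
    using F2_bound[OF hX S eS] by (simp add: X_def mv_neg cinner_neg_left cinner_neg_right)
  have Eale: "Ea \<le> D * Fr \<alpha> + 2 * c * Y - c\<^sup>2 * Fr \<alpha>"
  proof -
    have "Ea \<le> (\<Sum>s\<in>S. exp (lam s) * (D + 2 * c * Re (cinner s (G *v s)) - c\<^sup>2))"
      unfolding Ea_def
    proof (rule sum_mono)
      fix s assume sS: "s \<in> S"
      have "cinner s s = 1" using S(1) sS by (simp add: ons_def)
      from G_bound[OF G_hermitian this]
      have "Re (cinner (G *v s) (G *v s)) \<le> D + 2 * c * Re (cinner s (G *v s)) - c\<^sup>2"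
        unfolding c_def D_def by linarith
      thus "exp (lam s) * Re (cinner (G *v s) (G *v s)) \<le> exp (lam s) * (D + 2 * c * Re (cinner s (G *v s)) - c\<^sup>2)"
        by (intro mult_left_mono) auto
    qed
    also have "\<dots> = D * Fr \<alpha> + 2 * c * Y - c\<^sup>2 * Fr \<alpha>"
      unfolding Z Y_def by (simp add: algebra_simps sum.distrib sum_subtractf sum_distrib_left)
    finally show ?thesis .
  qed
  have "(F2 \<alpha> * Fr \<alpha> - F1 \<alpha> * F1 \<alpha>) / (Fr \<alpha> * Fr \<alpha>) \<le> D"
    unfolding Y by (rule final_alg[OF Frpos F2le Eale])
  thus "deriv (deriv (\<lambda>a. ln (Re (trace (mexp (mlog \<rho> - a *\<^sub>R G)))))) \<alpha>
             \<le> (lambda_max G - lambda_min G)\<^sup>2 / 4"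
    unfolding dd D_def .
qed

end
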